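(* If $T$ is a strongly connected tournament with more than one vertex, then $\overrightarrow{hn}_{P_3^*}(T)=\overrightarrow{hn}_{g}(T)=2$.
   Context: A tournament is an orientation of a complete graph. It is strong (strongly connected) if for every ordered pair of distinct vertices $u,v$ there is a directed $(u,v)$-path. For an oriented graph $D$ consider two interval functions: the geodetic one $I_g(u,v)$ = set of vertices on some shortest directed $(u,v)$-path or some shortest directed $(v,u)$-path; and the distance-two one $I_{P_3^*}(u,v)$ = $\{u,v\}$ together with all vertices $w$ such that $(u,w),(w,v)\in A(D)$ and $(u,v)\notin A(D)$, or $(v,w),(w,u)\in A(D)$ and $(v,u)\notin A(D)$ (i.e. vertices on a shortest directed path of length exactly two between them in either direction). For an interval function $I$ and $S\subseteq V(D)$, $I(S)=\bigcup_{u,v\in S}I(u,v)$; $C$ is convex if $I(C)=C$; the convex hull of $S$ is the smallest convex set containing $S$; a hull set is a set with convex hull $V(D)$; the hull number ($\overrightarrow{hn}_g$, resp. $\overrightarrow{hn}_{P_3^*}$) is the minimum size of a hull set for the respective interval function. *)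

theory Defs
  imports Main
begin

definition oriented_graph :: "'a set \<Rightarrow> ('a \<times> 'a) set \<Rightarrow> bool" where
  "oriented_graph V A \<longleftrightarrow> finite V \<and> A \<subseteq> V \<times> V \<and>
     (\<forall>u. (u, u) \<notin> A) \<and> (\<forall>u v. (u, v) \<in> A \<longrightarrow> (v, u) \<notin> A)"

definition tournament :: "'a set \<Rightarrow> ('a \<times> 'a) set \<Rightarrow> bool" where
  "tournament V A \<longleftrightarrow> oriented_graph V A \<and>
     (\<forall>u\<in>V. \<forall>v\<in>V. u \<noteq> v \<longrightarrow> (u, v) \<in> A \<or> (v, u) \<in> A)"

definition dpath :: "('a \<times> 'a) set \<Rightarrow> 'a list \<Rightarrow> 'a \<Rightarrow> 'a \<Rightarrow> bool" where
  "dpath A p u v \<longleftrightarrow> p \<noteq> [] \<and> hd p = u \<and> last p = v \<and> distinct p \<and>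
     (\<forall>i. Suc i < length p \<longrightarrow> (p ! i, p ! Suc i) \<in> A)"

definition strongly_connected :: "'a set \<Rightarrow> ('a \<times> 'a) set \<Rightarrow> bool" where
  "strongly_connected V A \<longleftrightarrow> (\<forall>u\<in>V. \<forall>v\<in>V. u \<noteq> v \<longrightarrow> (\<exists>p. dpath A p u v))"

definition shortest_dpath :: "('a \<times> 'a) set \<Rightarrow> 'a list \<Rightarrow> 'a \<Rightarrow> 'a \<Rightarrow> bool" where
  "shortest_dpath A p u v \<longleftrightarrow> dpath A p u v \<and> (\<forall>q. dpath A q u v \<longrightarrow> length p \<le> length q)"

definition I_g :: "('a \<times> 'a) set \<Rightarrow> 'a \<Rightarrow> 'a \<Rightarrow> 'a set" where
  "I_g A u v = {w. \<exists>p. (shortest_dpath A p u v \<or> shortest_dpath A p v u) \<and> w \<in> set p}"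

definition I_P3 :: "('a \<times> 'a) set \<Rightarrow> 'a \<Rightarrow> 'a \<Rightarrow> 'a set" where
  "I_P3 A u v = {u, v} \<union>
     {w. ((u, w) \<in> A \<and> (w, v) \<in> A \<and> (u, v) \<notin> A) \<or> ((v, w) \<in> A \<and> (w, u) \<in> A \<and> (v, u) \<notin> A)}"

definition interval_image :: "('a \<Rightarrow> 'a \<Rightarrow> 'a set) \<Rightarrow> 'a set \<Rightarrow> 'a set" where
  "interval_image I S = (\<Union>u\<in>S. \<Union>v\<in>S. I u v)"

definition is_convex :: "('a \<Rightarrow> 'a \<Rightarrow> 'a set) \<Rightarrow> 'a set \<Rightarrow> bool" where
  "is_convex I C \<longleftrightarrow> interval_image I C = C"

definition convex_hull_of :: "('a \<Rightarrow> 'a \<Rightarrow> 'a set) \<Rightarrow> 'a set \<Rightarrow> 'a set \<Rightarrow> 'a set" where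
  "convex_hull_of I V S = \<Inter>{C. C \<subseteq> V \<and> S \<subseteq> C \<and> is_convex I C}"

definition hull_set :: "('a \<Rightarrow> 'a \<Rightarrow> 'a set) \<Rightarrow> 'a set \<Rightarrow> 'a set \<Rightarrow> bool" where
  "hull_set I V S \<longleftrightarrow> S \<subseteq> V \<and> convex_hull_of I V S = V"

definition hull_number :: "('a \<Rightarrow> 'a \<Rightarrow> 'a set) \<Rightarrow> 'a set \<Rightarrow> nat" where
  "hull_number I V = (LEAST k. \<exists>S. hull_set I V S \<and> card S = k)"

end

theory Submission
  imports Defs
begin

lemma exit_lemma:
  "xs \<noteq> [] \<Longrightarrow> P (hd xs) \<Longrightarrow> \<not> P (last xs) \<Longrightarrow>
   \<exists>i. Suc i < length xs \<and> P (xs ! i) \<and> \<not> P (xs ! Suc i)"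
proof (induction xs)
  case Nil then show ?case by simp
next
  case (Cons a xs)
  show ?case
  proof (cases "xs = []")
    case True with Cons show ?thesis by simp
  next
    case False
    show ?thesis
    proof (cases "P (hd xs)")
      case True
      with Cons.IH False Cons.prems obtain i where "Suc i < length xs \<and> P (xs!i) \<and> \<not> P (xs ! Suc i)"
        by auto
      then show ?thesis by (intro exI[of _ "Suc i"]) auto
    next
      case False2: False
      then show ?thesis using Cons.prems False by (intro exI[of _ 0]) (auto simp: hd_conv_nth)
    qed
  qed
qed

lemma dpath_arc: "dpath A p u v \<Longrightarrow> Suc i < length p \<Longrightarrow> (p ! i, p ! Suc i) \<in> A"
  by (simp add: dpath_def)

lemma dpath_set:
  assumes "dpath A p u v" "A \<subseteq> V \<times> V" "u \<in> V"
  shows "set p \<subseteq> V"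
proof
  fix z assume "z \<in> set p"
  then obtain i where i: "i < length p" "p ! i = z" by (auto simp: in_set_conv_nth)
  show "z \<in> V"
  proof (cases i)
    case 0
    then show ?thesis using i assms by (auto simp: dpath_def hd_conv_nth)
  next
    case (Suc j)
    then have "(p ! j, p ! i) \<in> A" using dpath_arc[OF assms(1), of j] i by simp
    then show ?thesis using assms(2) i by auto
  qed
qed

lemma dpath_same: assumes "dpath A p u u" shows "p = [u]"
proof -
  have ne: "p \<noteq> []" and d: "distinct p" and h: "hd p = u" and l: "last p = u"
    using assms by (auto simp: dpath_def)
  have "length p = 1"
  proof (rule ccontr)
    assume "length p \<noteq> 1"
    then have len: "length p \<ge> 2" using ne by (cases p) (auto simp: Suc_le_eq)
    have "p ! 0 = p ! (length p - 1)" using h l ne by (simp add: hd_conv_nth last_conv_nth)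
    then have "0 = length p - 1" using d len nth_eq_iff_index_eq by fastforce
    then show False using len by simp
  qed
  then show ?thesis using h by (cases p) auto
qed

lemma dpath_len2: assumes "dpath A p u v" "u \<noteq> v" shows "length p \<ge> 2"
proof -
  have "p \<noteq> []" "hd p = u" "last p = v" using assms by (auto simp: dpath_def)
  then have "length p \<noteq> 1" using assms(2) by (cases p) auto
  then show ?thesis using \<open>p \<noteq> []\<close> by (cases p) (auto simp: Suc_le_eq)
qed

lemma dpath_len2_arc: assumes "dpath A p u v" "length p = 2" shows "(u, v) \<in> A"
proof -
  obtain x y where p: "p = [x, y]" using assms(2)
    by (cases p; cases "tl p") auto
  have "Suc 0 < length p" using assms(2) by simp
  then have "(p ! 0, p ! Suc 0) \<in> A" using assms(1) unfolding dpath_def by blast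
  moreover have "hd p = u" "last p = v" using assms(1) unfolding dpath_def by auto
  ultimately show ?thesis using p by simp
qed

lemma hull_least: "D \<subseteq> V \<Longrightarrow> S \<subseteq> D \<Longrightarrow> is_convex I D \<Longrightarrow> convex_hull_of I V S \<subseteq> D"
  by (auto simp: convex_hull_of_def)

lemma hull_sup: "S \<subseteq> convex_hull_of I V S"
  by (auto simp: convex_hull_of_def)

lemma convexD: "is_convex I C \<Longrightarrow> u \<in> C \<Longrightarrow> v \<in> C \<Longrightarrow> z \<in> I u v \<Longrightarrow> z \<in> C"
  unfolding is_convex_def interval_image_def by blast

lemma P3_refl_mem: "u \<in> I_P3 A u v" "v \<in> I_P3 A u v" by (auto simp: I_P3_def)

lemma convexI_gen:
  assumes R: "\<And>x. x \<in> C \<Longrightarrow> x \<in> I x x"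
    and H: "\<And>u v z. u \<in> C \<Longrightarrow> v \<in> C \<Longrightarrow> z \<in> I u v \<Longrightarrow> z \<in> C"
  shows "is_convex I C"
proof -
  have "interval_image I C \<subseteq> C"
    unfolding interval_image_def using H by blast
  moreover have "C \<subseteq> interval_image I C"
  proof
    fix x assume "x \<in> C"
    then show "x \<in> interval_image I C"
      unfolding interval_image_def using R[of x] by blast
  qed
  ultimately show ?thesis unfolding is_convex_def by blast
qed

lemma convexI_P3:
  "(\<And>u v z. u \<in> C \<Longrightarrow> v \<in> C \<Longrightarrow> z \<in> I_P3 A u v \<Longrightarrow> z \<in> C) \<Longrightarrow> is_convex (I_P3 A) C"
proof -
  assume H: "\<And>u v z. u \<in> C \<Longrightarrow> v \<in> C \<Longrightarrow> z \<in> I_P3 A u v \<Longrightarrow> z \<in> C"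
  have "interval_image (I_P3 A) C \<subseteq> C"
    unfolding interval_image_def using H by blast
  moreover have "C \<subseteq> interval_image (I_P3 A) C"
  proof
    fix x assume "x \<in> C"
    then show "x \<in> interval_image (I_P3 A) C"
      unfolding interval_image_def using P3_refl_mem(1)[of x A x] by blast
  qed
  ultimately show ?thesis unfolding is_convex_def by blast
qed

lemma hull_convex_P3:
  assumes "A \<subseteq> V \<times> V"
  shows "is_convex (I_P3 A) (convex_hull_of (I_P3 A) V S)"
proof (rule convexI_P3)
  fix u v z assume u: "u \<in> convex_hull_of (I_P3 A) V S" and v: "v \<in> convex_hull_of (I_P3 A) V S"
    and z: "z \<in> I_P3 A u v"
  show "z \<in> convex_hull_of (I_P3 A) V S"
    unfolding convex_hull_of_def
  proof
    fix D assume D: "D \<in> {C. C \<subseteq> V \<and> S \<subseteq> C \<and> is_convex (I_P3 A) C}"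
    then have "u \<in> D" "v \<in> D" using u v unfolding convex_hull_of_def by auto
    moreover have "is_convex (I_P3 A) D" using D by simp
    ultimately show "z \<in> D" using z convexD[of "I_P3 A" D u v z] by simp
  qed
qed

lemma lower_bound:
  assumes "finite V" "card V > 1" "\<And>x. x \<in> V \<Longrightarrow> I x x = {x}" "hull_set I V S"
  shows "2 \<le> card S"
proof (rule ccontr)
  assume "\<not> 2 \<le> card S"
  then have c: "card S < 2" by simp
  have SV: "S \<subseteq> V" using assms(4) by (simp add: hull_set_def)
  have fS: "finite S" using SV assms(1) finite_subset by blast
  have cv: "is_convex I S"
  proof (cases "card S = 0")
    case True
    then have "S = {}" using fS by simp
    then show ?thesis by (simp add: is_convex_def interval_image_def)
  next
    case False
    then have "card S = 1" using c by simp
    then obtain x where "S = {x}" by (rule card_1_singletonE)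
    then show ?thesis using SV assms(3) by (simp add: is_convex_def interval_image_def)
  qed
  have "V \<subseteq> S" using hull_least[of S V S I] cv SV assms(4) by (simp add: hull_set_def)
  then have "card V \<le> card S" using fS card_mono by blast
  then show False using c assms(2) by simp
qed

lemma least2:
  assumes "\<exists>S. hull_set I V S \<and> card S = 2" "\<And>S. hull_set I V S \<Longrightarrow> 2 \<le> card S"
  shows "hull_number I V = 2"
  unfolding hull_number_def
  by (rule Least_equality) (use assms in auto)


context
  fixes V :: "'a set" and A :: "('a \<times> 'a) set"
  assumes T: "tournament V A"
begin

lemma finV: "finite V" using T by (simp add: tournament_def oriented_graph_def)
lemma subA: "A \<subseteq> V \<times> V" using T by (simp add: tournament_def oriented_graph_def)
lemma irr: "(u, u) \<notin> A" using T by (simp add: tournament_def oriented_graph_def)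
lemma asy: "(u, v) \<in> A \<Longrightarrow> (v, u) \<notin> A" using T by (simp add: tournament_def oriented_graph_def)
lemma tot: "u \<in> V \<Longrightarrow> v \<in> V \<Longrightarrow> u \<noteq> v \<Longrightarrow> (u, v) \<in> A \<or> (v, u) \<in> A"
  using T by (simp add: tournament_def)
lemma arcV: "(u, v) \<in> A \<Longrightarrow> u \<in> V \<and> v \<in> V" using subA by auto

lemma short_single: "shortest_dpath A [x] x x"
  by (auto simp: shortest_dpath_def dpath_def Suc_le_eq)

lemma short_arc: assumes "(u, v) \<in> A" shows "shortest_dpath A [u, v] u v"
proof -
  have uv: "u \<noteq> v" using assms irr by auto
  have "dpath A [u, v] u v" using assms uv by (auto simp: dpath_def less_Suc_eq)
  moreover have "length [u, v] \<le> length q" if "dpath A q u v" for q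
    using dpath_len2[OF that uv] by simp
  ultimately show ?thesis by (auto simp: shortest_dpath_def)
qed

lemma short_two: assumes "(u, z) \<in> A" "(z, v) \<in> A" "(u, v) \<notin> A"
  shows "shortest_dpath A [u, z, v] u v"
proof -
  have uv: "u \<noteq> v" using assms asy by auto
  have "u \<noteq> z" "z \<noteq> v" using assms irr by auto
  then have "dpath A [u, z, v] u v" using assms uv
    by (auto simp: dpath_def less_Suc_eq nth_Cons split: nat.splits)
  moreover have "length [u, z, v] \<le> length q" if "dpath A q u v" for q
  proof -
    have "length q \<ge> 2" using dpath_len2[OF that uv] .
    moreover have "length q \<noteq> 2" using dpath_len2_arc[OF that] assms(3) by auto
    ultimately show ?thesis by simp
  qed
  ultimately show ?thesis by (auto simp: shortest_dpath_def)
qed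

lemma endpoints_g: assumes "u \<in> V" "v \<in> V" shows "u \<in> I_g A u v" "v \<in> I_g A u v"
proof -
  have "u \<in> I_g A u v \<and> v \<in> I_g A u v"
  proof (cases "u = v")
    case True
    then show ?thesis using short_single[of u] unfolding I_g_def by force
  next
    case False
    then consider "(u, v) \<in> A" | "(v, u) \<in> A" using tot assms by blast
    then show ?thesis
    proof cases
      case 1
      then show ?thesis using short_arc[OF 1] unfolding I_g_def by force
    next
      case 2
      then show ?thesis using short_arc[OF 2] unfolding I_g_def by force
    qed
  qed
  then show "u \<in> I_g A u v" "v \<in> I_g A u v" by auto
qed

lemma P3_sub_g: assumes "u \<in> V" "v \<in> V" shows "I_P3 A u v \<subseteq> I_g A u v"
proof
  fix z assume "z \<in> I_P3 A u v"
  then consider "z = u" | "z = v" | "(u, z) \<in> A \<and> (z, v) \<in> A \<and> (u, v) \<notin> A"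
    | "(v, z) \<in> A \<and> (z, u) \<in> A \<and> (v, u) \<notin> A"
    unfolding I_P3_def by blast
  then show "z \<in> I_g A u v"
  proof cases
    case 1 then show ?thesis using endpoints_g assms by simp
  next
    case 2 then show ?thesis using endpoints_g assms by simp
  next
    case 3 then show ?thesis using short_two[of u z v] unfolding I_g_def by force
  next
    case 4 then show ?thesis using short_two[of v z u] unfolding I_g_def by force
  qed
qed

lemma I_g_refl: "I_g A x x = {x}"
proof -
  have "I_g A x x \<subseteq> {x}"
    unfolding I_g_def shortest_dpath_def using dpath_same by fastforce
  moreover have "x \<in> I_g A x x" using short_single[of x] unfolding I_g_def by force
  ultimately show ?thesis by blast
qed

lemma I_P3_refl: "I_P3 A x x = {x}"
  unfolding I_P3_def using asy by blast

lemma V_convex_g: "is_convex (I_g A) V"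
proof -
  have "I_g A u v \<subseteq> V" if "u \<in> V" "v \<in> V" for u v
  proof
    fix z assume "z \<in> I_g A u v"
    then obtain p where "shortest_dpath A p u v \<or> shortest_dpath A p v u" "z \<in> set p"
      unfolding I_g_def by blast
    then show "z \<in> V" using dpath_set[OF _ subA] that unfolding shortest_dpath_def by blast
  qed
  then show ?thesis by (intro convexI_gen) (auto simp: I_g_refl)
qed

lemma V_convex_P3: "is_convex (I_P3 A) V"
  by (rule convexI_P3) (use subA in \<open>auto simp: I_P3_def\<close>)

lemma P3_convex_of_g: assumes "C \<subseteq> V" "is_convex (I_g A) C" shows "is_convex (I_P3 A) C"
proof (rule convexI_P3)
  fix u v z assume "u \<in> C" "v \<in> C" "z \<in> I_P3 A u v"
  then show "z \<in> C" using P3_sub_g assms convexD[OF assms(2)] by blast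
qed

end


context
  fixes V :: "'a set" and A :: "('a \<times> 'a) set"
  assumes T: "tournament V A" and S: "strongly_connected V A"
begin

lemma path_ex: "u \<in> V \<Longrightarrow> v \<in> V \<Longrightarrow> u \<noteq> v \<Longrightarrow> \<exists>p. dpath A p u v"
  using S by (simp add: strongly_connected_def)

lemma three_cycle:
  assumes "card V > 1"
  shows "\<exists>a b c. (a, b) \<in> A \<and> (b, c) \<in> A \<and> (c, a) \<in> A"
proof -
  have "V \<noteq> {}" using assms by auto
  then obtain u where u: "u \<in> V" by blast
  have "V - {u} \<noteq> {}"
  proof
    assume "V - {u} = {}"
    then have "V = {u}" using u by blast
    then show False using assms by simp
  qed
  then obtain v where v: "v \<in> V" "v \<noteq> u" by blast
  obtain x y where xy: "(x, y) \<in> A"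
    using tot[OF T u v(1)] v(2) by blast
  have xyV: "x \<in> V" "y \<in> V" "x \<noteq> y" using arcV[OF T xy] irr[OF T] xy by auto
  obtain p where p: "dpath A p y x" using path_ex xyV by metis
  have "p \<noteq> []" "hd p = y" "last p = x" using p by (auto simp: dpath_def)
  then obtain i where i: "Suc i < length p" "(x, p ! i) \<in> A" "(x, p ! Suc i) \<notin> A"
    using exit_lemma[of p "\<lambda>z. (x, z) \<in> A"] xy irr[OF T] by auto
  have arc: "(p ! i, p ! Suc i) \<in> A" using dpath_arc[OF p i(1)] .
  have ne: "p ! Suc i \<noteq> x" using arc i(2) asy[OF T] by auto
  have "p ! Suc i \<in> V" using arcV[OF T arc] by simp
  then have "(p ! Suc i, x) \<in> A" using tot[OF T xyV(1)] ne i(3) by blast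
  then show ?thesis using i(2) arc by blast
qed

definition H where "H a b = convex_hull_of (I_P3 A) V {a, b}"

lemma H_props:
  assumes "a \<in> V" "b \<in> V"
  shows "is_convex (I_P3 A) (H a b)" "a \<in> H a b" "b \<in> H a b" "H a b \<subseteq> V"
    "\<And>D. D \<subseteq> V \<Longrightarrow> a \<in> D \<Longrightarrow> b \<in> D \<Longrightarrow> is_convex (I_P3 A) D \<Longrightarrow> H a b \<subseteq> D"
  unfolding H_def
  using hull_convex_P3[OF subA[OF T]] hull_sup[of "{a,b}"] hull_least[of V V "{a,b}" "I_P3 A"]
    V_convex_P3[OF T] assms hull_least[of _ V "{a,b}" "I_P3 A"]
  by auto

lemma pair_hull:
  assumes cV: "card V > 1"
  shows "\<exists>a\<in>V. \<exists>b\<in>V. a \<noteq> b \<and> H a b = V"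
proof -
  have fin: "finite V" using finV[OF T] .
  have asy': "\<And>u v. (u, v) \<in> A \<Longrightarrow> (v, u) \<notin> A" using asy[OF T] .
  have irr': "\<And>u. (u, u) \<notin> A" using irr[OF T] .
  have tot': "\<And>u v. u \<in> V \<Longrightarrow> v \<in> V \<Longrightarrow> u \<noteq> v \<Longrightarrow> (u, v) \<in> A \<or> (v, u) \<in> A"
    using tot[OF T] .
  have arcV': "\<And>u v. (u, v) \<in> A \<Longrightarrow> u \<in> V \<and> v \<in> V" using arcV[OF T] .
  define f where "f = (\<lambda>q. card (H (fst q) (snd q)))"
  define M where "M = Max (f ` (V \<times> V))"
  have "V \<noteq> {}" using cV by auto
  then have ne: "f ` (V \<times> V) \<noteq> {}" by auto
  have fin2: "finite (f ` (V \<times> V))" using fin by simp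
  have "M \<in> f ` (V \<times> V)" unfolding M_def using Max_in[OF fin2 ne] .
  then obtain a b where ab: "a \<in> V" "b \<in> V" "f (a, b) = M" by auto
  have max: "card (H x y) \<le> card (H a b)" if "x \<in> V" "y \<in> V" for x y
  proof -
    have "f (x, y) \<le> M" unfolding M_def using Max_ge[OF fin2] that by auto
    then show ?thesis using ab(3) by (simp add: f_def)
  qed
  define C where "C = H a b"
  have Ccv: "is_convex (I_P3 A) C" and aC: "a \<in> C" and bC: "b \<in> C" and CV: "C \<subseteq> V"
    and Cleast: "\<And>D. D \<subseteq> V \<Longrightarrow> a \<in> D \<Longrightarrow> b \<in> D \<Longrightarrow> is_convex (I_P3 A) D \<Longrightarrow> C \<subseteq> D"
    using H_props[OF ab(1,2)] unfolding C_def by auto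
  have finC: "finite C" using CV fin finite_subset by blast
  have c3: "3 \<le> card C"
  proof -
    obtain p q r where pqr: "(p, q) \<in> A" "(q, r) \<in> A" "(r, p) \<in> A" using three_cycle cV by blast
    have pq: "p \<in> V" "q \<in> V" using arcV' pqr by auto
    have "r \<in> I_P3 A p q" unfolding I_P3_def using pqr asy' by auto
    then have "r \<in> H p q" using H_props[OF pq] convexD[of "I_P3 A" "H p q" p q r] by auto
    then have sub: "{p, q, r} \<subseteq> H p q" using H_props[OF pq] by auto
    have "p \<noteq> q" "q \<noteq> r" "r \<noteq> p" using pqr irr' by auto
    then have "card {p, q, r} = 3" by simp
    moreover have "finite (H p q)" using H_props[OF pq] fin finite_subset by blast
    ultimately have "3 \<le> card (H p q)" using card_mono[OF _ sub] by simp
    then show ?thesis using max[OF pq] unfolding C_def by simp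
  qed
  have "C = V"
  proof (rule ccontr)
    assume CneV: "C \<noteq> V"
    have key: "(\<forall>c\<in>C. (c, w) \<in> A) \<or> (\<forall>c\<in>C. (w, c) \<in> A)" if w: "w \<in> V" "w \<notin> C" for w
    proof (rule ccontr)
      assume neg: "\<not> ((\<forall>c\<in>C. (c, w) \<in> A) \<or> (\<forall>c\<in>C. (w, c) \<in> A))"
      define In where "In = {c \<in> C. (c, w) \<in> A}"
      define Out where "Out = {c \<in> C. (w, c) \<in> A}"
      have InOut: "c \<in> In \<or> c \<in> Out" if "c \<in> C" for c
        using tot'[of c w] that CV w unfolding In_def Out_def by auto
      have disj: "c \<notin> In \<or> c \<notin> Out" for c using asy' unfolding In_def Out_def by auto
      have InC: "In \<subseteq> C" and OutC: "Out \<subseteq> C" unfolding In_def Out_def by auto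
      obtain o1 where o1: "o1 \<in> Out" using neg InOut unfolding In_def by auto
      obtain i1 where i1: "i1 \<in> In" using neg InOut unfolding Out_def by auto
      have noback: "(ob, i) \<notin> A" if "ob \<in> Out" "i \<in> In" for ob i
      proof
        assume oi: "(ob, i) \<in> A"
        have "w \<in> I_P3 A ob i" unfolding I_P3_def using that oi asy' unfolding In_def Out_def by auto
        then have "w \<in> C" using convexD[OF Ccv] that InC OutC by blast
        then show False using w by simp
      qed
      have fwd: "(i, ob) \<in> A" if "i \<in> In" "ob \<in> Out" for i ob
      proof -
        have "i \<noteq> ob" using disj that by blast
        moreover have "i \<in> V" "ob \<in> V" using that InC OutC CV by auto
        ultimately show ?thesis using tot' noback that by blast
      qed
      have cvIn: "is_convex (I_P3 A) In"
      proof (rule convexI_P3)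
        fix u v z assume uv: "u \<in> In" "v \<in> In" and z: "z \<in> I_P3 A u v"
        have zC: "z \<in> C" using convexD[OF Ccv _ _ z] uv InC by blast
        show "z \<in> In"
        proof (rule ccontr)
          assume "z \<notin> In"
          then have zO: "z \<in> Out" using InOut zC by blast
          have "z \<noteq> u" "z \<noteq> v" using \<open>z \<notin> In\<close> uv by auto
          then show False using z noback[OF zO uv(1)] noback[OF zO uv(2)] unfolding I_P3_def by auto
        qed
      qed
      have cvOut: "is_convex (I_P3 A) Out"
      proof (rule convexI_P3)
        fix u v z assume uv: "u \<in> Out" "v \<in> Out" and z: "z \<in> I_P3 A u v"
        have zC: "z \<in> C" using convexD[OF Ccv _ _ z] uv OutC by blast
        show "z \<in> Out"
        proof (rule ccontr)
          assume "z \<notin> Out"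
          then have zI: "z \<in> In" using InOut zC by blast
          have "z \<noteq> u" "z \<noteq> v" using \<open>z \<notin> Out\<close> uv by auto
          then show False using z noback[OF uv(1) zI] noback[OF uv(2) zI] unfolding I_P3_def by auto
        qed
      qed
      consider "a \<in> In" "b \<in> In" | "a \<in> Out" "b \<in> Out"
        | x y where "x \<in> In" "y \<in> Out" "{a, b} = {x, y}"
        using InOut aC bC by blast
      then show False
      proof cases
        case 1
        then have "C \<subseteq> In" using Cleast[OF _ _ _ cvIn] InC CV by blast
        then show False using o1 OutC disj by blast
      next
        case 2
        then have "C \<subseteq> Out" using Cleast[OF _ _ _ cvOut] OutC CV by blast
        then show False using i1 InC disj by blast
      next
        case (3 x y)
        have xyC: "x \<in> C" "y \<in> C" using 3 InC OutC by auto
        have cvxy: "is_convex (I_P3 A) {x, y}"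
        proof (rule convexI_P3)
          fix u v z assume uv: "u \<in> {x, y}" "v \<in> {x, y}" and z: "z \<in> I_P3 A u v"
          have zC: "z \<in> C" using convexD[OF Ccv _ _ z] uv xyC by blast
          show "z \<in> {x, y}"
          proof (rule ccontr)
            assume zn: "z \<notin> {x, y}"
            then have "z \<noteq> u" "z \<noteq> v" using uv by auto
            have fxy: "(x, y) \<in> A" using fwd 3 by blast
            have "x \<noteq> y" using fxy irr' by auto
            have zz: "(x, z) \<in> A \<and> (z, y) \<in> A \<and> (x, y) \<notin> A \<or> (y, z) \<in> A \<and> (z, x) \<in> A \<and> (y, x) \<notin> A"
              using z uv zn asy' unfolding I_P3_def by blast
            then have yzx: "(y, z) \<in> A" "(z, x) \<in> A" using fxy by auto
            show False
            proof (cases "z \<in> In")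
              case True
              then show ?thesis using fwd[OF True 3(2)] yzx asy' by blast
            next
              case False
              then have "z \<in> Out" using InOut zC by blast
              then show ?thesis using fwd[OF 3(1)] yzx asy' by blast
            qed
          qed
        qed
        have abxy: "a \<in> {x, y}" "b \<in> {x, y}" using 3(3) by auto
        have "{x, y} \<subseteq> V" using xyC CV by auto
        then have "C \<subseteq> {x, y}" using Cleast[OF _ abxy cvxy] by simp
        then have "card C \<le> card {x, y}" by (intro card_mono) auto
        also have "\<dots> \<le> 2" by (simp add: card_insert_le_m1)
        finally show False using c3 by simp
      qed
    qed
    define X where "X = {w \<in> V. w \<notin> C \<and> (\<forall>c\<in>C. (c, w) \<in> A)}"
    define Y where "Y = {w \<in> V. w \<notin> C \<and> (\<forall>c\<in>C. (w, c) \<in> A)}"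
    have XY: "z \<in> X \<or> z \<in> Y" if "z \<in> V" "z \<notin> C" for z
      using key[OF that] that unfolding X_def Y_def by auto
    obtain w where w: "w \<in> V" "w \<notin> C" using CneV CV by blast
    obtain x0 where x0: "x0 \<in> X"
    proof (cases "w \<in> X")
      case True then show ?thesis using that by blast
    next
      case False
      have "a \<noteq> w" using aC w by auto
      then obtain p where p: "dpath A p a w" using path_ex ab(1) w(1) by metis
      have "p \<noteq> []" "hd p = a" "last p = w" using p by (auto simp: dpath_def)
      then obtain i where i: "Suc i < length p" "p ! i \<in> C" "p ! Suc i \<notin> C"
        using exit_lemma[of p "\<lambda>z. z \<in> C"] aC w by auto
      have arc: "(p ! i, p ! Suc i) \<in> A" using dpath_arc[OF p i(1)] .
      have "p ! Suc i \<in> V" using arcV'[OF arc] by simp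
      then have "p ! Suc i \<in> X \<or> p ! Suc i \<in> Y" using XY i(3) by blast
      moreover have "p ! Suc i \<notin> Y" using arc asy' i(2) unfolding Y_def by blast
      ultimately show ?thesis using that by blast
    qed
    have "x0 \<noteq> a" using x0 aC unfolding X_def by auto
    moreover have "x0 \<in> V" using x0 unfolding X_def by auto
    ultimately obtain q where q: "dpath A q x0 a" using path_ex ab(1) by metis
    have "q \<noteq> []" "hd q = x0" "last q = a" using q by (auto simp: dpath_def)
    then obtain j where j: "Suc j < length q" "q ! j \<in> X" "q ! Suc j \<notin> X"
      using exit_lemma[of q "\<lambda>z. z \<in> X"] aC x0 unfolding X_def by auto
    define x' where "x' = q ! j"
    define y' where "y' = q ! Suc j"
    have arc: "(x', y') \<in> A" using dpath_arc[OF q j(1)] unfolding x'_def y'_def .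
    have y'V: "y' \<in> V" using arcV'[OF arc] by simp
    have x'X: "x' \<in> X" using j x'_def by simp
    have "y' \<notin> C"
    proof
      assume "y' \<in> C"
      then have "(y', x') \<in> A" using x'X unfolding X_def by auto
      then show False using arc asy' by blast
    qed
    then have y'Y: "y' \<in> Y" using XY y'V j(3) y'_def by blast
    have x'V: "x' \<in> V" using x'X unfolding X_def by auto
    have "C \<subseteq> H x' y'"
    proof
      fix c assume c: "c \<in> C"
      have "c \<in> I_P3 A x' y'" unfolding I_P3_def using c x'X y'Y arc asy' unfolding X_def Y_def by auto
      then show "c \<in> H x' y'" using H_props[OF x'V y'V] convexD[of "I_P3 A" "H x' y'" x' y' c] by auto
    qed
    moreover have "x' \<in> H x' y'" using H_props[OF x'V y'V] by auto
    ultimately have sub: "insert x' C \<subseteq> H x' y'" by blast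
    have "x' \<notin> C" using x'X unfolding X_def by auto
    then have "card (insert x' C) = card C + 1" using finC by simp
    moreover have "finite (H x' y')" using H_props[OF x'V y'V] fin finite_subset by blast
    ultimately have "card C + 1 \<le> card (H x' y')" using card_mono[OF _ sub] by simp
    then show False using max[OF x'V y'V] unfolding C_def by simp
  qed
  moreover have "a \<noteq> b"
  proof
    assume "a = b"
    have "is_convex (I_P3 A) {a}" by (rule convexI_P3) (simp add: I_P3_refl[OF T])
    moreover have "{a} \<subseteq> V" "a \<in> {a}" "b \<in> {a}" using ab \<open>a = b\<close> by auto
    ultimately have "C \<subseteq> {a}" using Cleast[of "{a}"] by blast
    then have "card C \<le> card {a}" by (intro card_mono) auto
    then have "card C \<le> 1" by simp
    then show False using c3 by simp
  qed
  ultimately show ?thesis using ab unfolding C_def by blast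
qed


end


theorem proposition5:
  fixes V :: "'a set" and A :: "('a \<times> 'a) set"
  assumes "tournament V A"
    and "strongly_connected V A"
    and "card V > 1"
  shows "hull_number (I_P3 A) V = 2 \<and> hull_number (I_g A) V = 2"
proof -
  obtain a b where ab: "a \<in> V" "b \<in> V" "a \<noteq> b" "H V A a b = V"
    using pair_hull[OF assms] by blast
  have hP: "convex_hull_of (I_P3 A) V {a, b} = V" using ab(4) H_def[OF assms(1,2)] by simp
  have c2: "card {a, b} = 2" using ab(3) by simp
  have sub: "{a, b} \<subseteq> V" using ab by simp
  have fin: "finite V" using finV[OF assms(1)] .
  have P3: "hull_number (I_P3 A) V = 2"
  proof (rule least2)
    show "\<exists>S. hull_set (I_P3 A) V S \<and> card S = 2"
      using hP c2 sub unfolding hull_set_def by blast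
    show "2 \<le> card S" if "hull_set (I_P3 A) V S" for S
      using lower_bound[OF fin assms(3) _ that] I_P3_refl[OF assms(1)] by blast
  qed
  have hg: "convex_hull_of (I_g A) V {a, b} = V"
  proof
    show "convex_hull_of (I_g A) V {a, b} \<subseteq> V"
      using hull_least[OF _ sub V_convex_g[OF assms(1)]] by simp
    show "V \<subseteq> convex_hull_of (I_g A) V {a, b}"
      unfolding convex_hull_of_def
    proof (rule Inter_greatest)
      fix D assume D: "D \<in> {C. C \<subseteq> V \<and> {a, b} \<subseteq> C \<and> is_convex (I_g A) C}"
      then have "is_convex (I_P3 A) D" using P3_convex_of_g[OF assms(1), of D] by simp
      moreover have "D \<subseteq> V" "{a, b} \<subseteq> D" using D by auto
      ultimately have "convex_hull_of (I_P3 A) V {a, b} \<subseteq> D"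
        using hull_least[of D V "{a, b}" "I_P3 A"] by simp
      then show "V \<subseteq> D" using hP by simp
    qed
  qed
  have G: "hull_number (I_g A) V = 2"
  proof (rule least2)
    show "\<exists>S. hull_set (I_g A) V S \<and> card S = 2"
      using hg c2 sub unfolding hull_set_def by blast
    show "2 \<le> card S" if "hull_set (I_g A) V S" for S
      using lower_bound[OF fin assms(3) _ that] I_g_refl[OF assms(1)] by blast
  qed
  show ?thesis using P3 G by simp
qed

end
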